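(* Let $\mathbb{A}$ be an epistemic Heyting algebra and $a\in\mathbb{A}$. If $[b]\in\mathsf{Min}_i(\mathbb{A}^a)$, then $\lozenge_i(b\wedge a)$ is the unique $i$-minimal element of $\mathbb{A}$ which belongs to $[b]$.
   Context: Fix a set $\mathsf{Ag}$ of agents. A monadic Heyting algebra is a Heyting algebra $\mathbb{L}$ with, for each $i\in\mathsf{Ag}$, monotone unary operations $\lozenge_i,\Box_i$ such that for all $a,b$: $a\leq\lozenge_i a$; $\Box_i a\leq a$; $\lozenge_i(a\vee b)\leq\lozenge_i a\vee\lozenge_i b$; $\Box_i(a\to b)\leq\Box_i a\to\Box_i b$; $\lozenge_i a\leq\Box_i\lozenge_i a$; $\lozenge_i\Box_i a\leq\Box_i a$; $\Box_i(a\to b)\leq\lozenge_i a\to\lozenge_i b$; $\lozenge_i\bot\leq\bot$; $\top\leq\Box_i\top$. An epistemic Heyting algebra is a finite monadic Heyting algebra with $\lozenge_i a\vee\neg\lozenge_i a=\top$ for all $i,a$. An element $c$ is $i$-minimal if $c\neq\bot$, $\lozenge_i c=c$, and whenever $d<c$ and $\lozenge_i d=d$ then $d=\bot$; $\mathsf{Min}_i(\cdot)$ is the set of $i$-minimal elements. The pseudo-quotient algebra $\mathbb{A}^a$: $b\cong_a c$ iff $b\wedge a=c\wedge a$; carrier the quotient Heyting algebra $\mathbb{L}/{\cong_a}$ with classes $[c]$ ($[b]\leq[c]$ iff $b\wedge a\leq c\wedge a$); $\lozenge^a_i[b]=[\lozenge_i(b\wedge a)]$, $\Box^a_i[b]=[\Box_i(a\to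 b)]$; $i$-minimality in $\mathbb{A}^a$ is w.r.t. $\lozenge^a_i$. *)

theory Defs
  imports Main
begin

text \<open>A Heyting algebra: a bounded lattice (carrier = the type) with a relative
pseudo-complement imp.  Distributivity follows from the residuation law.\<close>
locale heyting_algebra =
  fixes imp :: "'a::bounded_lattice \<Rightarrow> 'a \<Rightarrow> 'a"
  assumes residuation: "\<And>x y z. inf x y \<le> z \<longleftrightarrow> x \<le> imp y z"

locale monadic_heyting_algebra = heyting_algebra imp
  for imp :: "'a::bounded_lattice \<Rightarrow> 'a \<Rightarrow> 'a" +
  fixes dia :: "'i \<Rightarrow> 'a \<Rightarrow> 'a"
    and box :: "'i \<Rightarrow> 'a \<Rightarrow> 'a"
  assumes dia_mono: "\<And>i. mono (dia i)"
    and box_mono: "\<And>i. mono (box i)"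
    and dia_infl: "\<And>i a. a \<le> dia i a"
    and box_defl: "\<And>i a. box i a \<le> a"
    and dia_sup: "\<And>i a b. dia i (sup a b) \<le> sup (dia i a) (dia i b)"
    and box_K: "\<And>i a b. box i (imp a b) \<le> imp (box i a) (box i b)"
    and dia_box_dia: "\<And>i a. dia i a \<le> box i (dia i a)"
    and dia_box: "\<And>i a. dia i (box i a) \<le> box i a"
    and box_imp_dia: "\<And>i a b. box i (imp a b) \<le> imp (dia i a) (dia i b)"
    and dia_bot: "\<And>i. dia i bot \<le> bot"
    and box_top: "\<And>i. top \<le> box i top"

locale epistemic_heyting_algebra = monadic_heyting_algebra imp dia box
  for imp :: "'a::{bounded_lattice,finite} \<Rightarrow> 'a \<Rightarrow> 'a"
  and dia :: "'i \<Rightarrow> 'a \<Rightarrow> 'a" and box :: "'i \<Rightarrow> 'a \<Rightarrow> 'a" +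
  assumes dia_excluded_middle: "\<And>i a. sup (dia i a) (imp (dia i a) bot) = top"

definition i_minimal :: "('i \<Rightarrow> 'a::bounded_lattice \<Rightarrow> 'a) \<Rightarrow> 'i \<Rightarrow> 'a \<Rightarrow> bool" where
  "i_minimal dia i c \<longleftrightarrow> c \<noteq> bot \<and> dia i c = c \<and>
     (\<forall>d. d < c \<and> dia i d = d \<longrightarrow> d = bot)"

text \<open>Pseudo-quotient A^a, described on representatives: b \<cong>_a c iff b \<and> a = c \<and> a;
 [b] \<le> [c] iff b \<and> a \<le> c \<and> a; dia^a [b] = [dia (b \<and> a)]; box^a [b] = [box (a \<rightarrow> b)].\<close>
definition pq_cong :: "'a::bounded_lattice \<Rightarrow> 'a \<Rightarrow> 'a \<Rightarrow> bool" where
  "pq_cong a b c \<longleftrightarrow> inf b a = inf c a"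

definition pq_le :: "'a::bounded_lattice \<Rightarrow> 'a \<Rightarrow> 'a \<Rightarrow> bool" where
  "pq_le a b c \<longleftrightarrow> inf b a \<le> inf c a"

definition pq_dia :: "('i \<Rightarrow> 'a::bounded_lattice \<Rightarrow> 'a) \<Rightarrow> 'a \<Rightarrow> 'i \<Rightarrow> 'a \<Rightarrow> 'a" where
  "pq_dia dia a i b = dia i (inf b a)"

definition pq_i_minimal :: "('i \<Rightarrow> 'a::bounded_lattice \<Rightarrow> 'a) \<Rightarrow> 'a \<Rightarrow> 'i \<Rightarrow> 'a \<Rightarrow> bool" where
  "pq_i_minimal dia a i b \<longleftrightarrow>
     \<not> pq_cong a b bot \<and> pq_cong a (pq_dia dia a i b) b \<and>
     (\<forall>d. pq_le a d b \<and> \<not> pq_cong a d b \<and> pq_cong a (pq_dia dia a i d) d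
          \<longrightarrow> pq_cong a d bot)"

end

theory Submission
  imports Defs
begin

theorem lemma5:
  fixes imp :: "'a::{bounded_lattice,finite} \<Rightarrow> 'a \<Rightarrow> 'a"
    and dia box :: "'i \<Rightarrow> 'a \<Rightarrow> 'a"
    and a b :: 'a and i :: 'i
  assumes "epistemic_heyting_algebra imp dia box"
    and "pq_i_minimal dia a i b"
  shows "i_minimal dia i (dia i (inf b a)) \<and> pq_cong a (dia i (inf b a)) b \<and>
         (\<forall>c. i_minimal dia i c \<and> pq_cong a c b \<longrightarrow> c = dia i (inf b a))"
proof -
  interpret E: epistemic_heyting_algebra imp dia box by fact
  have dm: "x \<le> y \<Longrightarrow> dia i x \<le> dia i y" for x y using E.dia_mono monoD by blast
  have bm: "x \<le> y \<Longrightarrow> box i x \<le> box i y" for x y using E.box_mono monoD by blast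
  have idem: "dia i (dia i x) = dia i x" for x
  proof (rule antisym)
    have "dia i (dia i x) \<le> dia i (box i (dia i x))" using dm E.dia_box_dia by blast
    also have "\<dots> \<le> box i (dia i x)" by (rule E.dia_box)
    also have "\<dots> \<le> dia i x" by (rule E.box_defl)
    finally show "dia i (dia i x) \<le> dia i x" .
  qed (rule E.dia_infl)
  define e where "e = dia i (inf b a)"
  from assms(2) have nb: "inf b a \<noteq> bot" and ce: "inf e a = inf b a"
    and mn: "\<And>d. inf d a \<le> inf b a \<Longrightarrow> inf d a \<noteq> inf b a \<Longrightarrow>
          inf (dia i (inf d a)) a = inf d a \<Longrightarrow> inf d a = bot"
    unfolding pq_i_minimal_def pq_cong_def pq_le_def pq_dia_def e_def by auto
  have ba_e: "inf b a \<le> e" unfolding e_def by (rule E.dia_infl)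
  have enb: "e \<noteq> bot" using ba_e nb bot_unique by blast
  have efix: "dia i e = e" unfolding e_def by (rule idem)
  have key: "d = bot" if dle: "d \<le> e" and df: "dia i d = d" and da: "inf d a = bot" for d
  proof -
    have boxd: "box i d = d"
    proof (rule antisym)
      show "box i d \<le> d" by (rule E.box_defl)
      have "d \<le> box i (dia i d)" using E.dia_box_dia[of i d] df by simp
      thus "d \<le> box i d" using df by simp
    qed
    have "inf (imp d bot) d \<le> bot" using E.residuation[of "imp d bot" d bot] by simp
    hence "inf d (imp d bot) \<le> bot" by (simp add: inf_commute)
    hence "d \<le> imp (imp d bot) bot" using E.residuation[of d "imp d bot" bot] by simp
    hence "box i d \<le> box i (imp (imp d bot) bot)" by (rule bm)
    also have "\<dots> \<le> imp (dia i (imp d bot)) (dia i bot)" by (rule E.box_imp_dia)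
    finally have "d \<le> imp (dia i (imp d bot)) (dia i bot)" using boxd by simp
    hence "inf d (dia i (imp d bot)) \<le> dia i bot" using E.residuation[of d "dia i (imp d bot)" "dia i bot"] by simp
    also have "\<dots> \<le> bot" by (rule E.dia_bot)
    finally have "inf (dia i (imp d bot)) d \<le> bot" by (simp add: inf_commute)
    hence "dia i (imp d bot) \<le> imp d bot" using E.residuation[of "dia i (imp d bot)" d bot] by simp
    moreover have "inf b a \<le> imp d bot"
    proof -
      have "inf (inf b a) d \<le> inf d a" by (simp add: le_infI1 le_infI2 inf.coboundedI2)
      hence "inf (inf b a) d \<le> bot" using da by simp
      thus ?thesis using E.residuation[of "inf b a" d bot] by simp
    qed
    ultimately have "e \<le> imp d bot" unfolding e_def using dm order_trans by blast
    hence "d \<le> imp d bot" using dle order_trans by blast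
    hence "inf d d \<le> bot" using E.residuation[of d d bot] by simp
    thus ?thesis by (simp add: bot_unique)
  qed
  have min_e: "i_minimal dia i e"
    unfolding i_minimal_def
  proof (intro conjI allI impI)
    show "e \<noteq> bot" by fact
    show "dia i e = e" by fact
    fix d assume h: "d < e \<and> dia i d = d"
    have dle: "d \<le> e" using h by (auto simp: less_le_not_le)
    have "inf d a \<le> inf e a" using dle by (simp add: inf.coboundedI1)
    hence dal: "inf d a \<le> inf b a" using ce by simp
    have dfix: "inf (dia i (inf d a)) a = inf d a"
    proof (rule antisym)
      have "dia i (inf d a) \<le> dia i d" by (rule dm) simp
      thus "inf (dia i (inf d a)) a \<le> inf d a" using h by (simp add: le_infI1)
      show "inf d a \<le> inf (dia i (inf d a)) a" using E.dia_infl by simp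
    qed
    have "inf d a = bot"
    proof (rule ccontr)
      assume "inf d a \<noteq> bot"
      hence "inf d a = inf b a" using mn dal dfix by blast
      moreover have "dia i (inf d a) \<le> dia i d" by (rule dm) simp
      ultimately have "e \<le> dia i d" unfolding e_def by simp
      thus False using h by (auto simp: less_le_not_le)
    qed
    thus "d = bot" using key dle h by blast
  qed
  have uniq: "c = e" if "i_minimal dia i c" "pq_cong a c b" for c
  proof -
    from that have cnb: "c \<noteq> bot" and cf: "dia i c = c"
      and cm: "\<And>d. d < c \<Longrightarrow> dia i d = d \<Longrightarrow> d = bot"
      and cc: "inf c a = inf b a" unfolding i_minimal_def pq_cong_def by auto
    have "inf c a \<le> c" by simp
    hence "inf b a \<le> c" using cc by simp
    hence "e \<le> c" unfolding e_def using dm[of "inf b a" c] cf by simp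
    show "c = e"
    proof (rule ccontr)
      assume "c \<noteq> e"
      hence "e < c" using \<open>e \<le> c\<close> by simp
      hence "e = bot" using cm efix by blast
      thus False using enb by simp
    qed
  qed
  show ?thesis using min_e ce uniq unfolding e_def pq_cong_def by blast
qed

end
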